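(* For any constant $C>0$, there exists no (possibly randomized) algorithm for the classical secretary problem with predictions (in the random order model) whose competitive ratio is better than $\max\{1-C\epsilon, 0.348\}$, where $\epsilon$ is the largest multiplicative prediction error of the instance. That is, there is no randomized algorithm such that for every instance $I$, its ratio $r(I)$ satisfies both $r(I) \ge 1 - C\epsilon(I)$ and $r(I) > 0.348$.
   Context: Classical secretary problem with predictions (random order model): there are $n$ candidates $N=\{1,\dots,n\}$, each with an actual value $v(i)>0$ and a predicted value $\hat v(i)\ge 0$; all predicted values (and $n$) are known to the algorithm in advance. The candidates arrive in an order drawn uniformly at random from all $n!$ permutations; upon arrival of a candidate the algorithm learns its index and actual value and must irrevocably decide whether to hire it; at most one candidate may be hired. The algorithm may use internal randomness. For an instance $I$, $\epsilon(I)=\max_{i\in N}|1-\hat v(i)/v(i)|$, and the ratio $r(I)$ of an algorithm is the expected value (over the random order and the algorithm's randomness) of the hired candidate (0 if none) divided by $\max_{i\in N} v(i)$. *)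

theory Defs
  imports Complex_Main "HOL-Combinatorics.Multiset_Permutations"
begin

text \<open>A (possibly randomized) online algorithm is given
  in behavioural form: A n vh h is the probability that the algorithm hires the
  most recently arrived candidate (the last entry of the history h), given that it has not
  hired anybody yet.  It knows n and all predictions vh in advance, and the history h is
  the list of (index, actual value) pairs of the candidates arrived so far, in arrival order.\<close>

type_synonym algorithm = "nat \<Rightarrow> (nat \<Rightarrow> real) \<Rightarrow> (nat \<times> real) list \<Rightarrow> real"

definition valid_algorithm :: "algorithm \<Rightarrow> bool" where
  "valid_algorithm A \<longleftrightarrow> (\<forall>n vh h. 0 \<le> A n vh h \<and> A n vh h \<le> 1)"

definition history :: "(nat \<Rightarrow> real) \<Rightarrow> nat list \<Rightarrow> nat \<Rightarrow> (nat \<times> real) list" where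
  "history v xs t = map (\<lambda>i. (i, v i)) (take (Suc t) xs)"

text \<open>Expected value of the hired candidate (0 if none) for a fixed arrival order xs.\<close>
definition value_of_order :: "algorithm \<Rightarrow> nat \<Rightarrow> (nat \<Rightarrow> real) \<Rightarrow> (nat \<Rightarrow> real) \<Rightarrow> nat list \<Rightarrow> real" where
  "value_of_order A n v vh xs =
     (\<Sum>t<n. v (xs ! t) * A n vh (history v xs t) * (\<Prod>s<t. 1 - A n vh (history v xs s)))"

definition expected_value :: "algorithm \<Rightarrow> nat \<Rightarrow> (nat \<Rightarrow> real) \<Rightarrow> (nat \<Rightarrow> real) \<Rightarrow> real" where
  "expected_value A n v vh =
     (\<Sum>xs\<in>permutations_of_set {0..<n}. value_of_order A n v vh xs) / real (fact n)"

definition ratio :: "algorithm \<Rightarrow> nat \<Rightarrow> (nat \<Rightarrow> real) \<Rightarrow> (nat \<Rightarrow> real) \<Rightarrow> real" where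
  "ratio A n v vh = expected_value A n v vh / Max (v ` {0..<n})"

definition pred_error :: "nat \<Rightarrow> (nat \<Rightarrow> real) \<Rightarrow> (nat \<Rightarrow> real) \<Rightarrow> real" where
  "pred_error n v vh = Max ((\<lambda>i. \<bar>1 - vh i / v i\<bar>) ` {0..<n})"

definition valid_instance :: "nat \<Rightarrow> (nat \<Rightarrow> real) \<Rightarrow> (nat \<Rightarrow> real) \<Rightarrow> bool" where
  "valid_instance n v vh \<longleftrightarrow> n \<ge> 1 \<and> (\<forall>i<n. v i > 0) \<and> (\<forall>i<n. vh i \<ge> 0)"

end

theory Submission imports Defs begin
lemma vo3: "value_of_order A 3 v vh [a,b,c] = v a * A 3 vh [(a,v a)] + v b * A 3 vh [(a, v a),(b, v b)] * (1 - A 3 vh [(a,v a)]) + v c * A 3 vh [(a,v a),(b,v b),(c,v c)] * ((1 - A 3 vh [(a,v a)]) * (1 - A 3 vh [(a,v a),(b,v b)]))"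
  by (simp add: value_of_order_def history_def eval_nat_numeral lessThan_Suc)

lemma perms3': "permutations_of_set {0,1,2::nat} = {[0,1,2],[0,2,1],[1,0,2],[1,2,0],[2,0,1],[2,1,0]}"
  apply (subst permutations_of_set_nonempty)
   apply simp
  apply (simp add: insert_Diff_if permutations_of_set_doubleton insert_commute)
  done

lemma r3': "{0..<3::nat} = {0,1,2}" by auto

lemma perms3: "permutations_of_set {0..<3::nat} = {[0,1,2],[0,2,1],[1,0,2],[1,2,0],[2,0,1],[2,1,0]}"
  unfolding r3' by (rule perms3')

lemma ev3: "expected_value A 3 v vh = (value_of_order A 3 v vh [0,1,2] + value_of_order A 3 v vh [0,2,1]
  + value_of_order A 3 v vh [1,0,2] + value_of_order A 3 v vh [1,2,0]
  + value_of_order A 3 v vh [2,0,1] + value_of_order A 3 v vh [2,1,0]) / 6"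
  unfolding expected_value_def perms3 by (simp add: eval_nat_numeral)

lemma bnd:
  fixes a0 a1 a2 va vb vc m :: real
  assumes "0 \<le> a0" "a0 \<le> 1" "0 \<le> a1" "a1 \<le> 1" "0 \<le> a2" "a2 \<le> 1"
    "0 \<le> vb" "vb \<le> m" "0 \<le> vc" "vc \<le> m"
  shows "va*a0 + vb*a1*(1-a0) + vc*a2*((1-a0)*(1-a1)) \<le> va*a0 + (1-a0)*m"
proof -
  have h1: "vb*a1 \<le> m*a1" using assms by (simp add: mult_right_mono)
  have h2: "vc*a2 \<le> m*a2" using assms by (simp add: mult_right_mono)
  have h3: "vc*a2*(1-a1) \<le> m*a2*(1-a1)" using h2 assms by (simp add: mult_right_mono)
  have m0: "0 \<le> m" using assms by linarith
  have "m*a2 \<le> m" using m0 assms by (simp add: mult_left_le)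
  then have h4: "m*a2*(1-a1) \<le> m*(1-a1)" using assms by (simp add: mult_right_mono)
  have h5: "m*a1 + m*(1-a1) = m" by (simp add: algebra_simps)
  have "vb*a1 + vc*a2*(1-a1) \<le> m" using h1 h3 h4 h5 by linarith
  then have "(vb*a1 + vc*a2*(1-a1))*(1-a0) \<le> m*(1-a0)" using assms by (simp add: mult_right_mono)
  then show ?thesis by (simp add: algebra_simps)
qed

lemma vo_bound:
  assumes "valid_algorithm A" "0 \<le> v b" "v b \<le> m" "0 \<le> v c" "v c \<le> m"
  shows "value_of_order A 3 v vh [a,b,c] \<le> v a * A 3 vh [(a, v a)] + (1 - A 3 vh [(a, v a)]) * m"
  unfolding vo3 using assms(1) unfolding valid_algorithm_def
  by (intro bnd) (use assms in auto)


lemma step_exists: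
  fixes f :: "nat \<Rightarrow> real"
  assumes "\<And>k. 0 \<le> f k" "\<And>k. f k \<le> 2"
  shows "\<exists>k. f (Suc k) - f k \<le> 1/20"
proof (rule ccontr)
  assume "\<not> ?thesis"
  then have h: "\<And>k. f (Suc k) - f k > 1/20" by (simp add: not_le)
  have "\<And>k. f k \<ge> f 0 + real k / 20"
  proof -
    fix k show "f k \<ge> f 0 + real k / 20"
    proof (induction k)
      case 0 then show ?case by simp
    next
      case (Suc k)
      have e: "f 0 + real (Suc k) / 20 = f 0 + real k / 20 + 1/20" by (simp add: add_divide_distrib)
      show ?case using Suc.IH h[of k] e by linarith
    qed
  qed
  from this[of 41] assms[of 0] assms[of 41] show False by simp
qed

theorem theorem3:
  fixes C :: real
  assumes "C > 0"
  shows "\<not> (\<exists>A. valid_algorithm A \<and>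
            (\<forall>n v vh. valid_instance n v vh \<longrightarrow>
               ratio A n v vh \<ge> 1 - C * pred_error n v vh \<and> ratio A n v vh > 0.348))"
proof
  assume "\<exists>A. valid_algorithm A \<and>
            (\<forall>n v vh. valid_instance n v vh \<longrightarrow>
               ratio A n v vh \<ge> 1 - C * pred_error n v vh \<and> ratio A n v vh > 0.348)"
  then obtain A where vA: "valid_algorithm A" and H: "\<And>n v vh. valid_instance n v vh \<Longrightarrow>
               ratio A n v vh \<ge> 1 - C * pred_error n v vh \<and> ratio A n v vh > 0.348" by blast
  have A01: "0 \<le> A n vh h" "A n vh h \<le> 1" for n vh h using vA unfolding valid_algorithm_def by auto
  have r3: "{0..<3::nat} = {0,1,2}" by auto
  define vh :: "nat \<Rightarrow> real" where "vh = (\<lambda>i. if i = 0 then 1 else 1/2)"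
  have vh0: "vh 0 = 1" and vh1: "vh 1 = 1/2" "vh (Suc 0) = 1/2" and vh2: "vh 2 = 1/2" by (auto simp: vh_def)
  have "valid_instance 3 vh vh" by (auto simp: valid_instance_def vh_def)
  from H[OF this] have "ratio A 3 vh vh \<ge> 1 - C * pred_error 3 vh vh" by blast
  moreover have "pred_error 3 vh vh = 0" unfolding pred_error_def r3 by (simp add: vh_def)
  moreover have "Max (vh ` {0..<3}) = 1" unfolding r3 by (simp add: vh_def)
  ultimately have E1: "expected_value A 3 vh vh \<ge> 1" by (simp add: ratio_def)
  define a0 where "a0 = A 3 vh [(0,1)]"
  have b1: "value_of_order A 3 vh vh [0,1,2] \<le> a0/2 + 1/2"
    using vo_bound[OF vA, of vh 1 "1/2" 2 vh 0] by (simp add: vh0 vh1 vh2 a0_def diff_divide_distrib)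
  have b2: "value_of_order A 3 vh vh [0,2,1] \<le> a0/2 + 1/2"
    using vo_bound[OF vA, of vh 2 "1/2" 1 vh 0] by (simp add: vh0 vh1 vh2 a0_def diff_divide_distrib)
  have gen: "value_of_order A 3 vh vh [a,b,c] \<le> 1" if "vh a \<le> 1" "0 \<le> vh b" "vh b \<le> 1" "0 \<le> vh c" "vh c \<le> 1" for a b c
  proof -
    have "value_of_order A 3 vh vh [a,b,c] \<le> vh a * A 3 vh [(a, vh a)] + (1 - A 3 vh [(a, vh a)]) * 1"
      using vo_bound[OF vA, of vh b 1 c vh a] that by simp
    also have "\<dots> \<le> 1"
    proof -
      have "vh a * A 3 vh [(a, vh a)] \<le> 1 * A 3 vh [(a, vh a)]"
        using that A01[of 3 vh "[(a, vh a)]"] by (intro mult_right_mono) auto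
      then show ?thesis by simp
    qed
    finally show ?thesis .
  qed
  have "value_of_order A 3 vh vh [1,0,2] \<le> 1" "value_of_order A 3 vh vh [1,2,0] \<le> 1"
     "value_of_order A 3 vh vh [2,0,1] \<le> 1" "value_of_order A 3 vh vh [2,1,0] \<le> 1"
    using gen[of 1 0 2] gen[of 1 2 0] gen[of 2 0 1] gen[of 2 1 0] by (simp_all add: vh0 vh1 vh2)
  moreover have "6 \<le> value_of_order A 3 vh vh [0,1,2] + value_of_order A 3 vh vh [0,2,1]
  + value_of_order A 3 vh vh [1,0,2] + value_of_order A 3 vh vh [1,2,0]
  + value_of_order A 3 vh vh [2,0,1] + value_of_order A 3 vh vh [2,1,0]"
    using E1 unfolding ev3 by simp
  ultimately have "a0 \<ge> 1" using b1 b2 by linarith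
  then have a0: "A 3 vh [(0,1)] = 1" using A01[of 3 vh "[(0,1)]"] unfolding a0_def by linarith
  define M :: real where "M = 1000"
  define f where "f k = A 3 vh [(1, M^k)] + A 3 vh [(2, M^k)]" for k
  obtain k where fk: "f (Suc k) - f k \<le> 1/20"
  proof -
    have "0 \<le> f k \<and> f k \<le> 2" for k
      using A01[of 3 vh "[(1, M^k)]"] A01[of 3 vh "[(2, M^k)]"] unfolding f_def by linarith
    then show ?thesis using step_exists[of f] that by blast
  qed
  define x where "x = M^k"
  define y where "y = M * x"
  have x1: "x \<ge> 1" unfolding x_def M_def by simp
  have yx: "y = 1000 * x" unfolding y_def M_def by simp
  have fy: "f (Suc k) = A 3 vh [(1, y)] + A 3 vh [(2, y)]" unfolding f_def y_def x_def by simp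
  have fx: "f k = A 3 vh [(1, x)] + A 3 vh [(2, x)]" unfolding f_def x_def by simp
  define v1 :: "nat \<Rightarrow> real" where "v1 = (\<lambda>i. if i = 0 then 1 else if i = 1 then x else y)"
  define v2 :: "nat \<Rightarrow> real" where "v2 = (\<lambda>i. if i = 0 then 1 else if i = 1 then y else x)"
  have v1s: "v1 0 = 1" "v1 1 = x" "v1 (Suc 0) = x" "v1 2 = y" by (auto simp: v1_def)
  have v2s: "v2 0 = 1" "v2 1 = y" "v2 (Suc 0) = y" "v2 2 = x" by (auto simp: v2_def)
  have "valid_instance 3 v1 vh" using x1 yx by (auto simp: valid_instance_def vh_def v1_def)
  from H[OF this] have R1: "ratio A 3 v1 vh > 0.348" by blast
  have "valid_instance 3 v2 vh" using x1 yx by (auto simp: valid_instance_def vh_def v2_def)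
  from H[OF this] have R2: "ratio A 3 v2 vh > 0.348" by blast
  have M1: "Max (v1 ` {0..<3}) = y" unfolding r3 using x1 yx by (simp add: v1s max_def)
  have M2: "Max (v2 ` {0..<3}) = y" unfolding r3 using x1 yx by (simp add: v2s max_def)
  have ypos: "y > 0" using x1 yx by simp
  have E1: "expected_value A 3 v1 vh > 0.348 * y" using R1 ypos unfolding ratio_def M1
    by (simp add: pos_less_divide_eq)
  have E2: "expected_value A 3 v2 vh > 0.348 * y" using R2 ypos unfolding ratio_def M2
    by (simp add: pos_less_divide_eq)
  define p1x where "p1x = A 3 vh [(1, x)]"
  define p2x where "p2x = A 3 vh [(2, x)]"
  define p1y where "p1y = A 3 vh [(1, y)]"
  define p2y where "p2y = A 3 vh [(2, y)]"
  define T1 where "T1 = x * p1x + (1 - p1x) * y"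
  define T2 where "T2 = y * p2y + (1 - p2y) * x"
  define T3 where "T3 = y * p1y + (1 - p1y) * x"
  define T4 where "T4 = x * p2x + (1 - p2x) * y"
  have c1: "value_of_order A 3 v1 vh [0,1,2] \<le> 1" "value_of_order A 3 v1 vh [0,2,1] \<le> 1"
    using vo_bound[OF vA, of v1 1 y 2 vh 0] vo_bound[OF vA, of v1 2 y 1 vh 0] x1 yx
    by (simp_all add: v1s a0)
  have c2: "value_of_order A 3 v1 vh [1,0,2] \<le> T1"
       "value_of_order A 3 v1 vh [1,2,0] \<le> T1"
    using vo_bound[OF vA, of v1 0 y 2 vh 1] vo_bound[OF vA, of v1 2 y 0 vh 1] x1 yx
    by (simp_all add: v1s p1x_def T1_def)
  have c3: "value_of_order A 3 v1 vh [2,0,1] \<le> T2"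
       "value_of_order A 3 v1 vh [2,1,0] \<le> T2"
    using vo_bound[OF vA, of v1 0 x 1 vh 2] vo_bound[OF vA, of v1 1 x 0 vh 2] x1 yx
    by (simp_all add: v1s p2y_def T2_def)
  have d1: "value_of_order A 3 v2 vh [0,1,2] \<le> 1" "value_of_order A 3 v2 vh [0,2,1] \<le> 1"
    using vo_bound[OF vA, of v2 1 y 2 vh 0] vo_bound[OF vA, of v2 2 y 1 vh 0] x1 yx
    by (simp_all add: v2s a0)
  have d2: "value_of_order A 3 v2 vh [1,0,2] \<le> T3"
       "value_of_order A 3 v2 vh [1,2,0] \<le> T3"
    using vo_bound[OF vA, of v2 0 x 2 vh 1] vo_bound[OF vA, of v2 2 x 0 vh 1] x1 yx
    by (simp_all add: v2s p1y_def T3_def)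
  have d3: "value_of_order A 3 v2 vh [2,0,1] \<le> T4"
       "value_of_order A 3 v2 vh [2,1,0] \<le> T4"
    using vo_bound[OF vA, of v2 0 y 1 vh 2] vo_bound[OF vA, of v2 1 y 0 vh 2] x1 yx
    by (simp_all add: v2s p2x_def T4_def)
  have E1': "87/250 * y * 6 < value_of_order A 3 v1 vh [0,1,2] + value_of_order A 3 v1 vh [0,2,1]
  + value_of_order A 3 v1 vh [1,0,2] + value_of_order A 3 v1 vh [1,2,0]
  + value_of_order A 3 v1 vh [2,0,1] + value_of_order A 3 v1 vh [2,1,0]"
    using E1 unfolding ev3 by simp
  have E2': "87/250 * y * 6 < value_of_order A 3 v2 vh [0,1,2] + value_of_order A 3 v2 vh [0,2,1]
  + value_of_order A 3 v2 vh [1,0,2] + value_of_order A 3 v2 vh [1,2,0]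
  + value_of_order A 3 v2 vh [2,0,1] + value_of_order A 3 v2 vh [2,1,0]"
    using E2 unfolding ev3 by simp
  have S: "87/250 * y * 12 < 4 + 2 * T1 + 2 * T2 + 2 * T3 + 2 * T4"
    using E1' E2' c1 c2 c3 d1 d2 d3 by linarith
  have S': "87/250 * y * 12 < 4 + 2*(x*p1x) + 2*y - 2*(y*p1x) + 2*(y*p2y) + 2*x - 2*(x*p2y)
     + 2*(y*p1y) + 2*x - 2*(x*p1y) + 2*(x*p2x) + 2*y - 2*(y*p2x)"
    using S unfolding T1_def T2_def T3_def T4_def by (simp add: algebra_simps)
  have pr: "0 \<le> p1x" "p1x \<le> 1" "0 \<le> p2x" "p2x \<le> 1" "0 \<le> p1y" "p1y \<le> 1" "0 \<le> p2y" "p2y \<le> 1"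
    unfolding p1x_def p2x_def p1y_def p2y_def using A01 by auto
  have x0: "0 \<le> x" using x1 by simp
  have l1: "x*p1x \<le> x" "x*p2x \<le> x" using pr x0 by (simp_all add: mult_left_le)
  have l2: "0 \<le> x*p1y" "0 \<le> x*p2y" using pr x0 by simp_all
  have F: "(p1y + p2y) - (p1x + p2x) \<le> 1/20" using fk fx fy unfolding p1x_def p2x_def p1y_def p2y_def by simp
  have "y * ((p1y + p2y) - (p1x + p2x)) \<le> y * (1/20)" using F ypos by (simp add: mult_left_mono)
  then have l3: "y*p1y + y*p2y - y*p1x - y*p2x \<le> y/20" by (simp add: algebra_simps)
  have "87/250 * y * 12 < 4 + 8 * x + 4 * y + 2 * (y / 20)"
    using S' l1 l2 l3 by linarith
  then show False using yx x1 by linarith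
qed

end
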